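(* Fix $k\in\mathbb{N}$, $q\in(0,1)$, $s=q^{-1/2}$ and $u>s$. There is a constant $\tilde C$ depending on $k,q,u$ such that for every $\lambda\in\mathsf{Sign}_k^+$ and every $\pi\in\mathcal{P}_{\lambda/\varnothing}$, $$|\mathcal{W}(\pi)|\le\tilde C\left(\frac{u-s}{su-1}\right)^{|\lambda|},$$ where $|\lambda|=\lambda_1+\dots+\lambda_k$.
   Context: $\mathsf{Sign}_k^+$ is the set of $\lambda=(\lambda_1\ge\dots\ge\lambda_k)$ with $\lambda_i\in\mathbb{Z}_{\ge0}$. A vertex has type $(i_1,j_1;i_2,j_2)$ if $i_1$ (resp. $j_1$) paths enter from below (resp. the left) and $i_2$ (resp. $j_2$) leave upward (resp. right). Weights with spectral parameter $z$ ($g\in\mathbb{Z}_{\ge0}$; all other types weight $0$): $w_z(g,0;g,0)=\frac{1-sq^gz}{1-sz}$, $w_z(g+1,0;g,1)=\frac{(1-s^2q^g)z}{1-sz}$, $w_z(g,1;g,1)=\frac{z-sq^g}{1-sz}$, $w_z(g,1;g+1,0)=\frac{1-q^{g+1}}{1-sz}$. For $\lambda\in\mathsf{Sign}_k^+$, $\mathcal{P}_{\lambda/\varnothing}$ is the set of collections of up-right paths in $\mathbb{Z}_{\ge0}\times\{1,\dots,k\}$ with at most one path per horizontal edge (vertical edges may carry several), one path entering through $(-1,y)\to(0,y)$ for each $y=1,\dots,k$, none entering from the bottom, and paths exiting at the top through $(\lambda_i,k)\to(\lambda_i,k+1)$, $i=1,\dots,k$ (with multiplicity). For such $\pi$, $\mathcal{W}(\pi)=\prod_{(x,y)}w_u(\text{type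 of }(x,y))$ (all spectral parameters equal to $u$). *)

theory Defs
  imports Complex_Main
begin

definition Sign_plus :: "nat \<Rightarrow> nat list set" where
  "Sign_plus k = {lam. length lam = k \<and> sorted_wrt (\<ge>) lam}"

definition wt :: "real \<Rightarrow> real \<Rightarrow> real \<Rightarrow> nat \<Rightarrow> nat \<Rightarrow> nat \<Rightarrow> nat \<Rightarrow> real" where
  "wt q s z i1 j1 i2 j2 =
    (if j1 = 0 \<and> j2 = 0 \<and> i1 = i2 then (1 - s * q ^ i1 * z) / (1 - s * z)
     else if j1 = 0 \<and> j2 = 1 \<and> i1 = i2 + 1 then (1 - s^2 * q ^ i2) * z / (1 - s * z)
     else if j1 = 1 \<and> j2 = 1 \<and> i1 = i2 then (z - s * q ^ i1) / (1 - s * z)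
     else if j1 = 1 \<and> j2 = 0 \<and> i2 = i1 + 1 then (1 - q ^ (i1 + 1)) / (1 - s * z)
     else 0)"

text \<open>A path collection is encoded by edge occupation numbers:
  H x y = number of paths on the horizontal edge (x-1,y) -> (x,y)  (x \<ge> 0, 1 \<le> y \<le> k),
  V x y = number of paths on the vertical edge (x,y) -> (x,y+1)    (x \<ge> 0, 0 \<le> y \<le> k),
  so V x 0 counts paths entering from the bottom and V x k paths exiting at the top.\<close>
definition is_config :: "nat \<Rightarrow> nat list \<Rightarrow> (nat \<Rightarrow> nat \<Rightarrow> nat) \<Rightarrow> (nat \<Rightarrow> nat \<Rightarrow> nat) \<Rightarrow> bool" where
  "is_config k lam H V \<longleftrightarrow>
     (\<forall>y\<in>{1..k}. H 0 y = 1) \<and>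
     (\<forall>x. \<forall>y\<in>{1..k}. H x y \<le> 1) \<and>
     (\<forall>x. V x 0 = 0) \<and>
     (\<forall>x. V x k = count_list lam x) \<and>
     (\<forall>x. \<forall>y\<in>{1..k}. V x (y - 1) + H x y = V x y + H (Suc x) y) \<and>
     (\<exists>N. \<forall>x\<ge>N. \<forall>y\<in>{0..k}. H x y = 0 \<and> V x y = 0)"

text \<open>Vertices (x,y) with at least one occupied incident edge; all other vertices
  have type (0,0;0,0), of weight 1.\<close>
definition occupied :: "nat \<Rightarrow> (nat \<Rightarrow> nat \<Rightarrow> nat) \<Rightarrow> (nat \<Rightarrow> nat \<Rightarrow> nat) \<Rightarrow> (nat \<times> nat) set" where
  "occupied k H V = {(x, y). y \<in> {1..k} \<and>
      (V x (y - 1) \<noteq> 0 \<or> H x y \<noteq> 0 \<or> V x y \<noteq> 0 \<or> H (Suc x) y \<noteq> 0)}"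

definition Wt :: "real \<Rightarrow> real \<Rightarrow> real \<Rightarrow> nat \<Rightarrow> (nat \<Rightarrow> nat \<Rightarrow> nat) \<Rightarrow> (nat \<Rightarrow> nat \<Rightarrow> nat) \<Rightarrow> real" where
  "Wt q s u k H V = (\<Prod>(x, y) \<in> occupied k H V. wt q s u (V x (y - 1)) (H x y) (V x y) (H (Suc x) y))"

end

theory Submission imports Defs begin

lemma sum_shift_down: "(\<Sum>y\<in>{1..n}. (f::nat\<Rightarrow>nat) (y-1)) + f n = (\<Sum>y\<in>{1..n}. f y) + f 0"
  by (induction n) (auto simp: add_ac)

lemma sum_shift_lt: "(\<Sum>x<N. (f::nat\<Rightarrow>nat) x) + f N = f 0 + (\<Sum>x<N. f (Suc x))"
  by (induction N) (auto simp: add_ac)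

lemma card_nz_le_sum:
  assumes "finite S" shows "card {x\<in>S. (f::'a\<Rightarrow>nat) x \<noteq> 0} \<le> sum f S"
proof -
  have "card {x\<in>S. f x \<noteq> 0} = (\<Sum>x\<in>{x\<in>S. f x \<noteq> 0}. 1)" by simp
  also have "\<dots> \<le> (\<Sum>x\<in>{x\<in>S. f x \<noteq> 0}. f x)" by (rule sum_mono) auto
  also have "\<dots> \<le> sum f S" by (rule sum_mono2) (use assms in auto)
  finally show ?thesis .
qed

lemma card_01_eq_sum:
  assumes "finite S" "\<And>x. x \<in> S \<Longrightarrow> (f::'a\<Rightarrow>nat) x \<le> 1"
  shows "card {x\<in>S. f x \<noteq> 0} = sum f S"
proof -
  have "sum f S = sum f {x\<in>S. f x \<noteq> 0}" by (rule sum.mono_neutral_right) (use assms in auto)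
  also have "\<dots> = (\<Sum>x\<in>{x\<in>S. f x \<noteq> 0}. 1)" by (rule sum.cong) (use assms in force)+
  finally show ?thesis by simp
qed

lemma g_step: "length (filter (\<lambda>i. x \<le> i) lam) = length (filter (\<lambda>i. Suc x \<le> i) lam) + count_list lam x"
  by (induction lam) auto

lemma sum_g: "set lam \<subseteq> {..<N} \<Longrightarrow> (\<Sum>x<N. length (filter (\<lambda>i. Suc x \<le> i) lam)) = sum_list lam"
proof (induction lam)
  case Nil then show ?case by simp
next
  case (Cons a lam)
  have "(\<Sum>x<N. length (filter (\<lambda>i. Suc x \<le> i) (a#lam))) =
        (\<Sum>x<N. (if Suc x \<le> a then 1 else 0)) + (\<Sum>x<N. length (filter (\<lambda>i. Suc x \<le> i) lam))"
    by (auto simp: sum.distrib[symmetric] intro!: sum.cong)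
  moreover have "(\<Sum>x<N. (if Suc x \<le> a then 1 else (0::nat))) = a"
  proof -
    have "(\<Sum>x<N. (if Suc x \<le> a then 1 else (0::nat))) = card {x\<in>{..<N}. Suc x \<le> a}"
      by (simp add: sum.If_cases Int_def)
    also have "{x\<in>{..<N}. Suc x \<le> a} = {..<a}" using Cons.prems by auto
    finally show ?thesis by simp
  qed
  ultimately show ?case using Cons by simp
qed

lemma wt_zero_vert:
  assumes "j1 \<le> 1" "j2 \<le> 1" "j1 \<noteq> 0 \<or> j2 \<noteq> 0"
  shows "wt q s u 0 j1 0 j2 = (if j1 = 1 \<and> j2 = 1 then (u-s)/(1-s*u) else 0)"
  using assms unfolding wt_def by (cases j1; cases j2) auto

lemma wt_bound:
  assumes "0 < q" "q \<le> 1" "0 \<le> s" "0 \<le> u" "s*u > 1"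
  shows "\<bar>wt q s u a b c d\<bar> \<le> 1 + (1 + s*u + s^2*u + u + s)/(s*u-1)"
proof -
  define T where "T = 1 + s*u + s^2*u + u + s"
  have d: "\<bar>1 - s*u\<bar> = s*u - 1" using assms by simp
  have T0: "0 \<le> T/(s*u-1)" using assms unfolding T_def by simp
  have key: "\<bar>n / (1 - s*u)\<bar> \<le> 1 + T/(s*u-1)" if "\<bar>n\<bar> \<le> T" for n
  proof -
    have "\<bar>n / (1 - s*u)\<bar> = \<bar>n\<bar> / (s*u-1)" by (simp add: abs_divide d)
    also have "\<dots> \<le> T/(s*u-1)" using that assms by (simp add: divide_right_mono)
    finally show ?thesis by simp
  qed
  have qi: "0 \<le> q^i" "q^i \<le> 1" for i::nat using assms by (auto simp: power_le_one)
  have p: "0 \<le> s^2*u" "0 \<le> s*u" using assms by simp_all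
  have b1: "\<bar>1 - s * q^i * u\<bar> \<le> T" for i
  proof -
    have "0 \<le> s*q^i*u" using assms qi by simp
    moreover have "s*q^i*u \<le> s*u" using assms qi mult_left_mono[of "q^i" 1 s]
      by (metis mult_right_mono mult.right_neutral)
    ultimately show ?thesis unfolding T_def abs_le_iff using assms p by linarith
  qed
  have b2: "\<bar>(1 - s^2 * q^i) * u\<bar> \<le> T" for i
  proof -
    have "0 \<le> s^2*q^i" using assms qi by simp
    moreover have "s^2*q^i \<le> s^2" using qi mult_left_mono[of "q^i" 1 "s^2"] by simp
    ultimately have "\<bar>1 - s^2 * q^i\<bar> \<le> 1 + s^2" by (simp add: abs_le_iff)
    hence "\<bar>(1 - s^2 * q^i) * u\<bar> \<le> (1 + s^2) * u" using assms by (simp add: abs_mult mult_right_mono)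
    thus ?thesis unfolding T_def using assms by (simp add: algebra_simps)
  qed
  have b3: "\<bar>u - s*q^i\<bar> \<le> T" for i
  proof -
    have "0 \<le> s*q^i" "s*q^i \<le> s" using assms qi mult_left_mono[of "q^i" 1 s] by auto
    thus ?thesis unfolding T_def abs_le_iff using assms p by linarith
  qed
  have b4: "\<bar>1 - q^(Suc i)\<bar> \<le> T" for i
  proof -
    have "0 \<le> q^Suc i" "q^Suc i \<le> 1" using qi by blast+
    thus ?thesis unfolding T_def abs_le_iff using assms p by linarith
  qed
  show ?thesis unfolding wt_def T_def[symmetric]
    using key[OF b1] key[OF b2] key[OF b3] key[OF b4] T0 by auto
qed

theorem lemma3p5:
  fixes k :: nat and q u :: real
  assumes "0 < q" and "q < 1" and "u > q powr (-1/2)"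
  shows "\<exists>C::real. \<forall>lam H V. lam \<in> Sign_plus k \<longrightarrow> is_config k lam H V \<longrightarrow>
           \<bar>Wt q (q powr (-1/2)) u k H V\<bar>
             \<le> C * ((u - q powr (-1/2)) / (q powr (-1/2) * u - 1)) ^ sum_list lam"
proof -
  define s where "s = q powr (-1/2)"
  have qh: "q powr (1/2) < 1" using powr_less_mono2[of "1/2" q 1] assms by simp
  have qh0: "0 < q powr (1/2)" using assms by simp
  have "s = 1 / q powr (1/2)" unfolding s_def using assms by (simp add: powr_minus_divide)
  hence s1: "s > 1" using qh qh0 by simp
  have us: "u > s" using assms s_def by simp
  have su: "s*u > 1" using s1 us by (metis less_trans mult_strict_mono' mult.right_neutral zero_le_one)
  define r where "r = (u - s)/(s*u - 1)"
  define M where "M = 1 + (1 + s*u + s^2*u + u + s)/(s*u-1)"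
  define K where "K = 2*k*k"
  have r0: "0 < r" unfolding r_def using su us by simp
  have r1: "r \<le> 1" unfolding r_def using su us s1
    by (simp add: divide_le_eq_1) (smt (verit) mult_le_cancel_left1 mult_less_cancel_right1)
  have wtb: "\<bar>wt q s u a b c d\<bar> \<le> M" for a b c d unfolding M_def
    by (rule wt_bound) (use assms s1 us su in auto)
  have M1: "1 \<le> M" using abs_ge_zero[of "wt q s u 0 0 0 0"] wtb[of 0 0 0 0] unfolding M_def
    using su s1 us by (simp add: add_nonneg_nonneg)
  have main: "\<bar>Wt q s u k H V\<bar> \<le> M^K / r^K * r ^ sum_list lam"
    if cfg: "is_config k lam H V" for lam H V
  proof -
    from cfg have H0: "\<forall>y\<in>{1..k}. H 0 y = 1" and H1: "\<forall>x. \<forall>y\<in>{1..k}. H x y \<le> 1"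
      and V0: "\<forall>x. V x 0 = 0" and Vk: "\<forall>x. V x k = count_list lam x"
      and cons: "\<forall>x. \<forall>y\<in>{1..k}. V x (y - 1) + H x y = V x y + H (Suc x) y"
      and "\<exists>N. \<forall>x\<ge>N. \<forall>y\<in>{0..k}. H x y = 0 \<and> V x y = 0"
      unfolding is_config_def by blast+
    then obtain N where NZ: "\<forall>x\<ge>N. \<forall>y\<in>{0..k}. H x y = 0 \<and> V x y = 0" by blast
    define w where "w = (\<lambda>(x,y). wt q s u (V x (y - 1)) (H x y) (V x y) (H (Suc x) y))"
    define Oc where "Oc = occupied k H V"
    have Wt_eq: "Wt q s u k H V = prod w Oc" unfolding Wt_def w_def Oc_def by simp
    have Osub: "Oc \<subseteq> {..<N} \<times> {1..k}"
    proof
      fix p assume "p \<in> Oc"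
      then obtain x y where p: "p = (x,y)" "y \<in> {1..k}"
        "V x (y - 1) \<noteq> 0 \<or> H x y \<noteq> 0 \<or> V x y \<noteq> 0 \<or> H (Suc x) y \<noteq> 0"
        unfolding Oc_def occupied_def by auto
      have "x < N"
      proof (rule ccontr)
        assume "\<not> x < N"
        then show False using p NZ by (auto dest: spec[of _ x] spec[of _ "Suc x"])
      qed
      thus "p \<in> {..<N} \<times> {1..k}" using p by auto
    qed
    have finO: "finite Oc" using Osub finite_subset by blast
    define A where "A = {(x,y)\<in>Oc. V x (y-1) = 0 \<and> V x y = 0}"
    define B where "B = Oc - A"
    have OAB: "Oc = A \<union> B" "A \<inter> B = {}" unfolding A_def B_def by auto
    have finA: "finite A" and finB: "finite B" using finO OAB by auto
    have Vsum: "y \<le> k \<Longrightarrow> (\<Sum>x<N. V x y) = y" for y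
    proof (induction y)
      case 0 thus ?case using V0 by simp
    next
      case (Suc y)
      have c: "(\<Sum>x<N. V x y + H x (Suc y)) = (\<Sum>x<N. V x (Suc y) + H (Suc x) (Suc y))"
      proof (rule sum.cong)
        fix x show "V x y + H x (Suc y) = V x (Suc y) + H (Suc x) (Suc y)"
          using bspec[OF spec[OF cons, of x], of "Suc y"] Suc.prems by simp
      qed simp
      have sh: "(\<Sum>x<N. H x (Suc y)) + H N (Suc y) = H 0 (Suc y) + (\<Sum>x<N. H (Suc x) (Suc y))"
        by (rule sum_shift_lt)
      have "H N (Suc y) = 0" using NZ Suc.prems by auto
      moreover have "H 0 (Suc y) = 1" using H0 Suc.prems by auto
      ultimately show ?case using c sh Suc by (simp add: sum.distrib)
    qed
    define S where "S = (SIGMA y:{1..k}. {x\<in>{..<N}. V x y \<noteq> 0})"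
    have cS: "card S \<le> k*k"
    proof -
      have "card S = (\<Sum>y\<in>{1..k}. card {x\<in>{..<N}. V x y \<noteq> 0})" unfolding S_def by simp
      also have "\<dots> \<le> (\<Sum>y\<in>{1..k}. k)"
      proof (rule sum_mono)
        fix y assume y: "y \<in> {1..k}"
        have "card {x\<in>{..<N}. V x y \<noteq> 0} \<le> (\<Sum>x<N. V x y)" by (rule card_nz_le_sum) simp
        also have "\<dots> = y" using Vsum y by simp
        finally show "card {x\<in>{..<N}. V x y \<noteq> 0} \<le> k" using y by simp
      qed
      finally show ?thesis by simp
    qed
    have finS: "finite S" unfolding S_def by simp
    have Bsub: "B \<subseteq> (\<lambda>(y,x). (x,y)) ` S \<union> (\<lambda>(y,x). (x, Suc y)) ` S"
    proof
      fix p assume pB: "p \<in> B"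
      then obtain x y where p: "p = (x,y)" "(x,y) \<in> Oc" and nz: "V x (y-1) \<noteq> 0 \<or> V x y \<noteq> 0"
        unfolding B_def A_def by (cases p) auto
      have xy: "x < N" "y \<in> {1..k}" using p Osub by auto
      show "p \<in> (\<lambda>(y,x). (x,y)) ` S \<union> (\<lambda>(y,x). (x, Suc y)) ` S"
      proof (cases "V x y \<noteq> 0")
        case True
        hence "(y,x) \<in> S" unfolding S_def using xy by auto
        thus ?thesis using p by force
      next
        case False
        hence v: "V x (y-1) \<noteq> 0" using nz by simp
        hence "y - 1 \<noteq> 0" using V0 by auto
        hence "(y-1,x) \<in> S" unfolding S_def using xy v by auto
        moreover have "p = (\<lambda>(y,x). (x, Suc y)) (y-1,x)" using p \<open>y - 1 \<noteq> 0\<close> by simp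
        ultimately show ?thesis by blast
      qed
    qed
    have cB: "card B \<le> K"
    proof -
      have "card B \<le> card ((\<lambda>(y,x). (x,y)) ` S \<union> (\<lambda>(y,x). (x, Suc y)) ` S)"
        by (rule card_mono) (use finS Bsub in auto)
      also have "\<dots> \<le> card ((\<lambda>(y,x). (x,y)) ` S) + card ((\<lambda>(y,x). (x, Suc y)) ` S)"
        by (rule card_Un_le)
      also have "\<dots> \<le> card S + card S" using card_image_le[OF finS] add_mono by metis
      finally show ?thesis using cS unfolding K_def by simp
    qed
    define h where "h x = (\<Sum>y\<in>{1..k}. H x y)" for x
    have hstep: "h x = h (Suc x) + count_list lam x" for x
    proof -
      have c: "(\<Sum>y\<in>{1..k}. V x (y-1) + H x y) = (\<Sum>y\<in>{1..k}. V x y + H (Suc x) y)"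
        using cons by (intro sum.cong) auto
      have sh: "(\<Sum>y\<in>{1..k}. V x (y-1)) + V x k = (\<Sum>y\<in>{1..k}. V x y) + V x 0"
        by (rule sum_shift_down)
      show ?thesis using c sh V0 Vk unfolding h_def by (simp add: sum.distrib)
    qed
    have hN: "N \<le> x \<Longrightarrow> h x = 0" for x unfolding h_def using NZ by auto
    have lamN: "set lam \<subseteq> {..<N}"
    proof
      fix a assume a: "a \<in> set lam"
      hence "count_list lam a \<noteq> 0" by (simp add: count_list_0_iff)
      hence "V a k \<noteq> 0" using Vk by simp
      thus "a \<in> {..<N}" using NZ by (metis atLeastAtMost_iff le0 lessThan_iff not_le order_refl)
    qed
    define g where "g x = length (filter (\<lambda>i. x \<le> i) lam)" for x
    have gN: "N \<le> x \<Longrightarrow> g x = 0" for x unfolding g_def using lamN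
      by (auto simp: filter_empty_conv)
    have hg: "h x = g x" for x
    proof (cases "N \<le> x")
      case True thus ?thesis using hN gN by simp
    next
      case False
      hence "x \<le> N" by simp
      thus ?thesis
      proof (induction rule: inc_induct)
        case base thus ?case using hN gN by simp
      next
        case (step n) thus ?case using hstep[of n] g_step[of n lam] unfolding g_def by simp
      qed
    qed
    have L: "(\<Sum>x<N. h (Suc x)) = sum_list lam" using sum_g[OF lamN] hg unfolding g_def by simp
    define E where "E = (SIGMA y:{1..k}. {x\<in>{..<N}. H (Suc x) y \<noteq> 0})"
    have cE: "card E = sum_list lam"
    proof -
      have "card E = (\<Sum>y\<in>{1..k}. card {x\<in>{..<N}. H (Suc x) y \<noteq> 0})" unfolding E_def by simp
      also have "\<dots> = (\<Sum>y\<in>{1..k}. \<Sum>x<N. H (Suc x) y)"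
      proof (rule sum.cong)
        fix y assume y: "y \<in> {1..k}"
        show "card {x\<in>{..<N}. H (Suc x) y \<noteq> 0} = (\<Sum>x<N. H (Suc x) y)"
          by (rule card_01_eq_sum) (use H1 y in auto)
      qed simp
      also have "\<dots> = (\<Sum>x<N. h (Suc x))" unfolding h_def by (rule sum.swap)
      finally show ?thesis using L by simp
    qed
    have "card E \<le> card Oc"
    proof (rule card_inj_on_le[of "\<lambda>(y,x). (x,y)"])
      show "inj_on (\<lambda>(y,x). (x,y)) E" by (auto simp: inj_on_def)
      show "(\<lambda>(y,x). (x,y)) ` E \<subseteq> Oc" unfolding E_def Oc_def occupied_def by auto
      show "finite Oc" by (rule finO)
    qed
    hence LcAB: "sum_list lam \<le> card A + card B"
      using cE OAB card_Un_disjoint[OF finA finB] by simp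
    have Aw: "\<bar>w p\<bar> \<le> r" if pA: "p \<in> A" for p
    proof -
      obtain x y where p: "p = (x,y)" "(x,y) \<in> Oc" "V x (y-1) = 0" "V x y = 0"
        using pA unfolding A_def by auto
      have y: "y \<in> {1..k}" using p Osub by auto
      have nz: "H x y \<noteq> 0 \<or> H (Suc x) y \<noteq> 0" using p unfolding Oc_def occupied_def by auto
      have "w p = (if H x y = 1 \<and> H (Suc x) y = 1 then (u-s)/(1-s*u) else 0)"
        unfolding w_def p(1) using p(3,4) wt_zero_vert[of "H x y" "H (Suc x) y"] H1 y nz by simp
      moreover have "\<bar>(u-s)/(1-s*u)\<bar> = r" unfolding r_def using us su
        by (simp add: abs_divide abs_minus_commute)
      ultimately show ?thesis using r0 by auto
    qed
    have "\<bar>Wt q s u k H V\<bar> = (\<Prod>p\<in>Oc. \<bar>w p\<bar>)" unfolding Wt_eq by (simp add: abs_prod)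
    also have "\<dots> = (\<Prod>p\<in>A. \<bar>w p\<bar>) * (\<Prod>p\<in>B. \<bar>w p\<bar>)"
      unfolding OAB(1) by (rule prod.union_disjoint) (use finA finB OAB in auto)
    also have "\<dots> \<le> r ^ card A * M ^ K"
    proof (rule mult_mono)
      show "(\<Prod>p\<in>A. \<bar>w p\<bar>) \<le> r ^ card A"
        using prod_mono[of A "\<lambda>p. \<bar>w p\<bar>" "\<lambda>_. r"] Aw by simp
      have "(\<Prod>p\<in>B. \<bar>w p\<bar>) \<le> M ^ card B"
        using prod_mono[of B "\<lambda>p. \<bar>w p\<bar>" "\<lambda>_. M"] wtb unfolding w_def by (simp add: case_prod_beta)
      also have "\<dots> \<le> M ^ K" using M1 cB by (simp add: power_increasing)
      finally show "(\<Prod>p\<in>B. \<bar>w p\<bar>) \<le> M ^ K" .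
      show "0 \<le> r ^ card A" using r0 by simp
      show "0 \<le> (\<Prod>p\<in>B. \<bar>w p\<bar>)" by (simp add: prod_nonneg)
    qed
    also have "\<dots> \<le> M^K / r^K * r ^ sum_list lam"
    proof -
      have "r ^ card A * r ^ K \<le> r ^ sum_list lam"
        unfolding power_add[symmetric] using r0 r1 LcAB cB by (intro power_decreasing) auto
      hence "r ^ card A \<le> r ^ sum_list lam / r ^ K" using r0 by (simp add: pos_le_divide_eq)
      hence "r ^ card A * M ^ K \<le> r ^ sum_list lam / r ^ K * M ^ K"
        using M1 by (intro mult_right_mono) auto
      thus ?thesis by (simp add: field_simps)
    qed
    finally show ?thesis .
  qed
  show ?thesis unfolding s_def[symmetric] r_def[symmetric] using main by blast
qed

end
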